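(* Let $J$ be a nonempty basic cylinder in $M_a$ and $p=(p_1,p_2,\dots)\in J$. Then for each $i\in\mathbb N$: $i\notin\Lambda(J)$ if and only if $x_i=p_i$ for all $x=(x_1,x_2,\dots)\in\mathrm{GS}(J,p)$.
   Context: Let $a=\{a_i\}$ be a sequence of positive reals with $\sum_i a_i^2<\infty$, $M_a=\{x\in\mathbb{R}^{\mathbb N}:\sum_i a_i^2x_i^2<\infty\}$ with inner product $\langle x,y\rangle_a=\sum_i a_i^2x_iy_i$ and norm $\|\cdot\|_a$. $e_i$ denotes the sequence with $1$ in position $i$ and $0$ elsewhere. For nonempty $E\subset M_a$, $\Lambda(E)$ is the set of $i$ for which there exist $x\in E$ and $\alpha\ne0$ with $x+\alpha e_i\in E$. For $p\in E$, $\mathrm{GS}(E,p)=\{p+\sum_i\alpha_i(x_i-p)\in M_a: x_i\in E,\ \alpha_i\in\mathbb R\}$, the index running over a finite or countable subset of $\mathbb N$, infinite sums being $\|\cdot\|_a$-limits of partial sums. A basic cylinder is a set $J=\prod_{i=1}^\infty J_i$ where, for some $n\in\mathbb N$ and pairwise disjoint $\Lambda_1,\dots,\Lambda_4\subset\{1,\dots,n\}$: $J_i=[0,p_{2i}]$ ($i\in\Lambda_1$), $[p_{1i},p_{2i}]$ ($i\in\Lambda_2$), $[p_{1i},1]$ ($i\in\Lambda_3$), $\{p_{1i}\}$ ($i\in\Lambda_4$), $[0,1]$ otherwise, with $0<p_{1i}<p_{2i}<1$ for $i\in\Lambda_1\cup\Lambda_2\cup\Lambda_3$ and $0\le p_{1i}\le1$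 for $i\in\Lambda_4$. *)

theory Defs
  imports "HOL-Analysis.Analysis"
begin

text \<open>Sequences are functions nat => real; indices are 0-based (paper's index i+1 is our i).\<close>

definition Ma :: "(nat \<Rightarrow> real) \<Rightarrow> (nat \<Rightarrow> real) set" where
  "Ma a = {x. summable (\<lambda>i. (a i)\<^sup>2 * (x i)\<^sup>2)}"

definition norm_a :: "(nat \<Rightarrow> real) \<Rightarrow> (nat \<Rightarrow> real) \<Rightarrow> real" where
  "norm_a a x = sqrt (\<Sum>i. (a i)\<^sup>2 * (x i)\<^sup>2)"

definition unitseq :: "nat \<Rightarrow> (nat \<Rightarrow> real)" where
  "unitseq i = (\<lambda>j. if j = i then 1 else 0)"

definition Lambda :: "(nat \<Rightarrow> real) set \<Rightarrow> nat set" where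
  "Lambda E = {i. \<exists>x\<in>E. \<exists>\<alpha>::real. \<alpha> \<noteq> 0 \<and> (\<lambda>j. x j + \<alpha> * unitseq i j) \<in> E}"

text \<open>GS(E,p): points p + sum alpha_i (x_i - p) in M_a, where the (finite or countable)
  index set is encoded by allowing alpha_i = 0; the series converges in norm_a.\<close>
definition GS :: "(nat \<Rightarrow> real) \<Rightarrow> (nat \<Rightarrow> real) set \<Rightarrow> (nat \<Rightarrow> real) \<Rightarrow> (nat \<Rightarrow> real) set" where
  "GS a E p = {y \<in> Ma a. \<exists>(xs :: nat \<Rightarrow> nat \<Rightarrow> real) (\<alpha> :: nat \<Rightarrow> real).
      (\<forall>k. xs k \<in> E) \<and>
      (\<lambda>n. norm_a a (\<lambda>j. y j - (p j + (\<Sum>k<n. \<alpha> k * (xs k j - p j))))) \<longlonglongrightarrow> 0}"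

definition basic_cylinder :: "(nat \<Rightarrow> real) set \<Rightarrow> bool" where
  "basic_cylinder J \<longleftrightarrow> (\<exists>(n::nat) L1 L2 L3 L4 (p1::nat \<Rightarrow> real) (p2::nat \<Rightarrow> real).
     L1 \<subseteq> {..<n} \<and> L2 \<subseteq> {..<n} \<and> L3 \<subseteq> {..<n} \<and> L4 \<subseteq> {..<n} \<and>
     L1 \<inter> L2 = {} \<and> L1 \<inter> L3 = {} \<and> L1 \<inter> L4 = {} \<and>
     L2 \<inter> L3 = {} \<and> L2 \<inter> L4 = {} \<and> L3 \<inter> L4 = {} \<and>
     (\<forall>i \<in> L1 \<union> L2 \<union> L3. 0 < p1 i \<and> p1 i < p2 i \<and> p2 i < 1) \<and>
     (\<forall>i \<in> L4. 0 \<le> p1 i \<and> p1 i \<le> 1) \<and>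
     J = {x. \<forall>i. x i \<in>
        (if i \<in> L1 then {0..p2 i}
         else if i \<in> L2 then {p1 i..p2 i}
         else if i \<in> L3 then {p1 i..1}
         else if i \<in> L4 then {p1 i}
         else {0..1})})"

end

theory Submission
  imports Defs
begin

lemma Ma_zero: "(\<lambda>j. 0) \<in> Ma a"
  by (simp add: Ma_def)

lemma Ma_add:
  assumes "x \<in> Ma a" "y \<in> Ma a"
  shows "(\<lambda>j. x j + y j) \<in> Ma a"
proof -
  have sx: "summable (\<lambda>i. (a i)\<^sup>2 * (x i)\<^sup>2)" and sy: "summable (\<lambda>i. (a i)\<^sup>2 * (y i)\<^sup>2)"
    using assms by (auto simp: Ma_def)
  have s: "summable (\<lambda>i. 2 * ((a i)\<^sup>2 * (x i)\<^sup>2) + 2 * ((a i)\<^sup>2 * (y i)\<^sup>2))"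
    by (intro summable_add summable_mult sx sy)
  have b: "norm ((a i)\<^sup>2 * (x i + y i)\<^sup>2) \<le> 2 * ((a i)\<^sup>2 * (x i)\<^sup>2) + 2 * ((a i)\<^sup>2 * (y i)\<^sup>2)" for i
  proof -
    have e: "(x i + y i)\<^sup>2 = 2 * (x i)\<^sup>2 + 2 * (y i)\<^sup>2 - (x i - y i)\<^sup>2"
      by (simp add: power2_eq_square algebra_simps)
    have "0 \<le> (x i - y i)\<^sup>2" by simp
    then have "(x i + y i)\<^sup>2 \<le> 2 * (x i)\<^sup>2 + 2 * (y i)\<^sup>2"
      using e by linarith
    then have "(a i)\<^sup>2 * (x i + y i)\<^sup>2 \<le> (a i)\<^sup>2 * (2 * (x i)\<^sup>2 + 2 * (y i)\<^sup>2)"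
      by (intro mult_left_mono) auto
    then show ?thesis by (simp add: algebra_simps)
  qed
  have "summable (\<lambda>i. (a i)\<^sup>2 * (x i + y i)\<^sup>2)"
    by (rule summable_comparison_test'[OF s, of 0]) (use b in simp)
  then show ?thesis unfolding Ma_def by simp
qed

lemma Ma_scale:
  assumes "x \<in> Ma a"
  shows "(\<lambda>j. c * x j) \<in> Ma a"
proof -
  have "summable (\<lambda>i. c\<^sup>2 * ((a i)\<^sup>2 * (x i)\<^sup>2))"
    using assms by (intro summable_mult) (auto simp: Ma_def)
  then show ?thesis by (simp add: Ma_def power_mult_distrib algebra_simps)
qed

lemma Ma_diff:
  assumes "x \<in> Ma a" "y \<in> Ma a"
  shows "(\<lambda>j. x j - y j) \<in> Ma a"
  using Ma_add[OF assms(1) Ma_scale[OF assms(2), of "-1"]] by simp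

lemma Ma_sum:
  fixes n :: nat
  assumes "\<And>k. f k \<in> Ma a"
  shows "(\<lambda>j. \<Sum>k<n. f k j) \<in> Ma a"
proof (induction n)
  case 0 then show ?case using Ma_zero by simp
next
  case (Suc n)
  then show ?case using Ma_add[OF Suc assms[of n]] by simp
qed

lemma norm_a_ge:
  assumes "z \<in> Ma a"
  shows "\<bar>a i\<bar> * \<bar>z i\<bar> \<le> norm_a a z"
proof -
  have s: "summable (\<lambda>i. (a i)\<^sup>2 * (z i)\<^sup>2)" using assms by (simp add: Ma_def)
  have "(a i)\<^sup>2 * (z i)\<^sup>2 \<le> (\<Sum>i. (a i)\<^sup>2 * (z i)\<^sup>2)"
    using sum_le_suminf[OF s, of "{i}"] by simp
  then have "sqrt ((a i * z i)\<^sup>2) \<le> norm_a a z"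
    unfolding norm_a_def by (simp add: power_mult_distrib)
  then show ?thesis by (simp add: abs_mult)
qed

theorem lemma3p4:
  fixes a :: "nat \<Rightarrow> real" and J :: "(nat \<Rightarrow> real) set" and p :: "nat \<Rightarrow> real" and i :: nat
  assumes "\<And>k. a k > 0"
    and "summable (\<lambda>k. (a k)\<^sup>2)"
    and "basic_cylinder J"
    and "J \<subseteq> Ma a"
    and "J \<noteq> {}"
    and "p \<in> J"
  shows "i \<notin> Lambda J \<longleftrightarrow> (\<forall>x \<in> GS a J p. x i = p i)"
proof
  assume nl: "i \<notin> Lambda J"
  have "\<exists>S. J = {x. \<forall>i. x i \<in> S i}"
    using assms(3) unfolding basic_cylinder_def
    by (elim exE conjE) (rule exI, assumption)
  then obtain S where JS: "J = {x. \<forall>i. x i \<in> S i}" by blast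
  have fix_i: "x i = p i" if "x \<in> J" for x
  proof (rule ccontr)
    assume ne: "x i \<noteq> p i"
    have "(\<lambda>j. x j + (p i - x i) * unitseq i j) = x(i := p i)"
      by (auto simp: unitseq_def)
    moreover have "x(i := p i) \<in> J" using that assms(6) JS by auto
    ultimately have "i \<in> Lambda J" unfolding Lambda_def using that ne
      by (intro CollectI bexI[of _ x] exI[of _ "p i - x i"]) auto
    then show False using nl by blast
  qed
  show "\<forall>x \<in> GS a J p. x i = p i"
  proof
    fix y assume "y \<in> GS a J p"
    then obtain xs \<alpha> where y: "y \<in> Ma a" and xs: "\<And>k. xs k \<in> J"
      and lim: "(\<lambda>n. norm_a a (\<lambda>j. y j - (p j + (\<Sum>k<n. \<alpha> k * (xs k j - p j))))) \<longlonglongrightarrow> 0"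
      unfolding GS_def by blast
    define z where "z n = (\<lambda>j. y j - (p j + (\<Sum>k<n. \<alpha> k * (xs k j - p j))))" for n
    have zM: "z n \<in> Ma a" for n
    proof -
      have "(\<lambda>j. \<alpha> k * (xs k j - p j)) \<in> Ma a" for k
      proof -
        have pM: "p \<in> Ma a" and xM: "xs k \<in> Ma a" using xs assms(4,6) by auto
        show ?thesis using Ma_scale[OF Ma_diff[OF xM pM], of "\<alpha> k"] .
      qed
      then have "(\<lambda>j. \<Sum>k<n. \<alpha> k * (xs k j - p j)) \<in> Ma a" by (rule Ma_sum)
      moreover have pM: "p \<in> Ma a" using assms(4,6) by auto
      ultimately have "(\<lambda>j. p j + (\<Sum>k<n. \<alpha> k * (xs k j - p j))) \<in> Ma a"
        using Ma_add[OF pM] by blast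
      from Ma_diff[OF y this] show ?thesis
        unfolding z_def .
    qed
    have zi: "z n i = y i - p i" for n
      using fix_i[OF xs] by (simp add: z_def)
    show "y i = p i"
    proof (rule ccontr)
      assume "y i \<noteq> p i"
      then have pos: "a i * \<bar>y i - p i\<bar> > 0" using assms(1)[of i] by auto
      from lim have "eventually (\<lambda>n. norm_a a (z n) < a i * \<bar>y i - p i\<bar>) sequentially"
        unfolding z_def using pos by (rule order_tendstoD)
      then obtain n where "norm_a a (z n) < a i * \<bar>y i - p i\<bar>"
        using eventually_sequentially by auto
      moreover have "\<bar>a i\<bar> * \<bar>z n i\<bar> \<le> norm_a a (z n)" by (rule norm_a_ge[OF zM])
      ultimately show False using zi assms(1)[of i] by auto
    qed
  qed
next
  assume all: "\<forall>x \<in> GS a J p. x i = p i"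
  show "i \<notin> Lambda J"
  proof
    assume "i \<in> Lambda J"
    then obtain x c where x: "x \<in> J" and c: "c \<noteq> 0"
      and x': "(\<lambda>j. x j + c * unitseq i j) \<in> J"
      unfolding Lambda_def by blast
    define x' where "x' = (\<lambda>j. x j + c * unitseq i j)"
    define y where "y = (\<lambda>j. p j + c * unitseq i j)"
    define xs where "xs = (\<lambda>k::nat. if k = 0 then x' else x)"
    define \<alpha> where "\<alpha> = (\<lambda>k::nat. if k = 0 then 1 else if k = 1 then -1 else (0::real))"
    have yM: "y \<in> Ma a"
    proof -
      have xM: "x \<in> Ma a" and x'M: "x' \<in> Ma a" and pM: "p \<in> Ma a"
        using x x' assms(4,6) unfolding x'_def by auto
      have "(\<lambda>j. p j + (x' j - x j)) \<in> Ma a"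
        by (rule Ma_add[OF pM Ma_diff[OF x'M xM]])
      then show ?thesis by (simp add: y_def x'_def)
    qed
    have ev: "eventually (\<lambda>n. norm_a a (\<lambda>j. y j - (p j + (\<Sum>k<n. \<alpha> k * (xs k j - p j)))) = 0) sequentially"
      unfolding eventually_sequentially
    proof (intro exI allI impI)
      fix n :: nat assume "2 \<le> n"
      then have "(\<Sum>k<n. \<alpha> k * (xs k j - p j)) = (\<Sum>k<2. \<alpha> k * (xs k j - p j))" for j
        by (intro sum.mono_neutral_right) (auto simp: \<alpha>_def)
      then have "(\<lambda>j. y j - (p j + (\<Sum>k<n. \<alpha> k * (xs k j - p j)))) = (\<lambda>j. 0)"
        by (auto simp: \<alpha>_def xs_def x'_def y_def eval_nat_numeral)
      then show "norm_a a (\<lambda>j. y j - (p j + (\<Sum>k<n. \<alpha> k * (xs k j - p j)))) = 0"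
        by (simp add: norm_a_def)
    qed
    have "y \<in> GS a J p"
      unfolding GS_def
      apply (intro CollectI conjI yM exI[of _ xs] exI[of _ \<alpha>])
      using x x' apply (simp add: xs_def x'_def)
      by (rule tendsto_eventually[OF ev])
    then have "y i = p i" using all by blast
    then show False using c by (simp add: y_def unitseq_def)
  qed
qed

end
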